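(* Consider the stochastic-follower setting (defined in the context), and run the following algorithm with an arbitrary estimation procedure: at each round $t$ the leader holds, for every $(\mathbf{z},\mathbf{x})$, an estimated probability vector $\widehat{\mathbf{p}}_t(\mathbf{z},\mathbf{x})=[\widehat{p}_t(b_{f_t}(\mathbf{z},\mathbf{x})=a_f)]_{a_f\in\mathcal{A}_f}$ computed from $f_1,\ldots,f_{t-1}$; upon observing $\mathbf{z}_t$ it commits to $\mathbf{x}_t=\pi_t(\mathbf{z}_t)\in\arg\max_{\mathbf{x}\in\mathcal{E}_{\mathbf{z}_t}}\sum_{a_f\in\mathcal{A}_f}u(\mathbf{z}_t,\mathbf{x},a_f)\,\widehat{p}_t(b_{f_t}(\mathbf{z}_t,\mathbf{x})=a_f)$, then observes $f_t$ and updates its estimate. Let $\mathbf{p}(\mathbf{z},\mathbf{x})=[\Pr_{f\sim\mathcal{F}}(b_f(\mathbf{z},\mathbf{x})=a_f)]_{a_f\in\mathcal{A}_f}$, and let $\pi^{(\mathcal{E})}$ be a policy with $\pi^{(\mathcal{E})}(\mathbf{z})\in\mathcal{E}_{\mathbf{z}}$ for all $\mathbf{z}$ such that $\sum_{t=1}^T\mathbb{E}_{f_t\sim\mathcal{F}}[u(\mathbf{z}_t,\pi^*(\mathbf{z}_t),b_{f_t}(\mathbf{z}_t,\pi^*(\mathbf{z}_t)))-u(\mathbf{z}_t,\pi^{(\mathcal{E})}(\mathbf{z}_t),b_{f_t}(\mathbf{z}_t,\pi^{(\mathcal{E})}(\mathbf{z}_t)))]\le 1$. Then the expected contextual Stackelberg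 regret satisfies $$\mathbb{E}[R(T)]\le 1+2\sum_{t=1}^T\mathbb{E}_{f_1,\ldots,f_{t-1}}\Big[\mathrm{TV}\big(\mathbf{p}(\mathbf{z}_t,\pi^{(\mathcal{E})}(\mathbf{z}_t)),\widehat{\mathbf{p}}_t(\mathbf{z}_t,\pi^{(\mathcal{E})}(\mathbf{z}_t))\big)+\mathrm{TV}\big(\mathbf{p}(\mathbf{z}_t,\pi_t(\mathbf{z}_t)),\widehat{\mathbf{p}}_t(\mathbf{z}_t,\pi_t(\mathbf{z}_t))\big)\Big].$$
   Context: Game: finite leader actions $\mathcal{A}$, finite follower actions $\mathcal{A}_f$, contexts $\mathcal{Z}\subseteq\mathbb{R}^d$, follower types $\alpha^{(1)},\ldots,\alpha^{(K)}$ ($K\le T$) with known utilities $u_{\alpha^{(i)}}:\mathcal{Z}\times\mathcal{A}\times\mathcal{A}_f\to[0,1]$, known leader utility $u:\mathcal{Z}\times\mathcal{A}\times\mathcal{A}_f\to[0,1]$, mixed strategies $\mathbf{x}\in\Delta(\mathcal{A})$, $u(\mathbf{z},\mathbf{x},a_f)=\sum_{a_l}\mathbf{x}[a_l]u(\mathbf{z},a_l,a_f)$; best response $b_f(\mathbf{z},\mathbf{x})\in\arg\max_{a_f}\sum_{a_l}\mathbf{x}[a_l]u_f(\mathbf{z},a_l,a_f)$ with ties broken by a fixed known ordering. Best-response regions: $\mathcal{X}_{\mathbf{z}}(\sigma)=\{\mathbf{x}: b_{\alpha^{(i)}}(\mathbf{z},\mathbf{x})=\sigma(\alpha^{(i)})\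 \forall i\}$ for $\sigma:\{\alpha^{(1)},\ldots,\alpha^{(K)}\}\to\mathcal{A}_f$. $\mathcal{E}_{\mathbf{z}}$ is a set of $\delta$-approximate extreme points ($\delta\le1/T$): for every $\sigma$ with $\mathcal{X}_{\mathbf{z}}(\sigma)\ne\emptyset$ and every extreme point $\mathbf{x}$ of $\mathrm{cl}(\mathcal{X}_{\mathbf{z}}(\sigma))$, either $\mathbf{x}\in\mathcal{X}_{\mathbf{z}}(\sigma)$ and $\mathbf{x}\in\mathcal{E}_{\mathbf{z}}$, or some $\mathbf{x}'\in\mathcal{E}_{\mathbf{z}}\cap\mathcal{X}_{\mathbf{z}}(\sigma)$ has $\|\mathbf{x}'-\mathbf{x}\|_1\le\delta$. Stochastic-follower setting: $f_1,\ldots,f_T$ are drawn i.i.d. from an unknown distribution $\mathcal{F}$ over types; the contexts are chosen by a (possibly adaptive) adversary which, when choosing $\mathbf{z}_t$, knows $\mathcal{F}$, the algorithm and $f_1,\ldots,f_{t-1}$ but not $f_t$. The leader observes $f_t$ after round $t$. Expected contextual Stackelberg regret: $\mathbb{E}[R(T)]=\mathbb{E}_{f_1,\ldots,f_T\sim\mathcal{F}}\big[\sum_t u(\mathbf{z}_t,\pi^*(\mathbf{z}_t),b_{f_t}(\mathbf{z}_t,\pi^*(\mathbf{z}_t)))-u(\mathbf{z}_t,\mathbf{x}_t,b_{f_t}(\mathbf{z}_t,\mathbf{x}_t))\big]$, where $\pi^*$ is the optimal policy given knowledge of $\mathbf{z}_1,\ldots,\mathbf{z}_T$ and $\mathcal{F}$.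 $\mathrm{TV}(\mathbf{p},\mathbf{q})=\frac12\sum_a|\mathbf{p}[a]-\mathbf{q}[a]|$. *)

theory Defs
  imports "HOL-Analysis.Analysis" "HOL-Probability.Probability"
begin

definition mixed_strats :: "(real^'a::finite) set" where
  "mixed_strats = {x. (\<forall>a. 0 \<le> x$a) \<and> (\<Sum>a\<in>UNIV. x$a) = 1}"

definition mixu :: "('c \<Rightarrow> 'a \<Rightarrow> 'b \<Rightarrow> real) \<Rightarrow> 'c \<Rightarrow> real^'a::finite \<Rightarrow> 'b \<Rightarrow> real" where
  "mixu w z x af = (\<Sum>a\<in>UNIV. x$a * w z a af)"

definition best_resp :: "('k \<Rightarrow> 'c \<Rightarrow> 'a \<Rightarrow> 'b \<Rightarrow> real) \<Rightarrow> 'k \<Rightarrow> 'c \<Rightarrow> real^'a::finite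
     \<Rightarrow> 'b::{finite,linorder}" where
  "best_resp uf k z x = Min {af. \<forall>af'. mixu (uf k) z x af' \<le> mixu (uf k) z x af}"

definition br_region :: "('k \<Rightarrow> 'c \<Rightarrow> 'a \<Rightarrow> 'b \<Rightarrow> real) \<Rightarrow> 'c \<Rightarrow> ('k \<Rightarrow> 'b::{finite,linorder})
     \<Rightarrow> (real^'a::finite) set" where
  "br_region uf z \<sigma> = {x \<in> mixed_strats. \<forall>k. best_resp uf k z x = \<sigma> k}"

definition l1dist :: "real^'a::finite \<Rightarrow> real^'a \<Rightarrow> real" where
  "l1dist x y = (\<Sum>a\<in>UNIV. \<bar>x$a - y$a\<bar>)"

definition approx_ext :: "('k \<Rightarrow> 'c \<Rightarrow> 'a \<Rightarrow> 'b::{finite,linorder} \<Rightarrow> real) \<Rightarrow> real \<Rightarrow> 'c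
     \<Rightarrow> (real^'a::finite) set \<Rightarrow> bool" where
  "approx_ext uf \<delta> z Ez \<longleftrightarrow>
     (\<forall>\<sigma>. br_region uf z \<sigma> \<noteq> {} \<longrightarrow>
        (\<forall>x. x extreme_point_of closure (br_region uf z \<sigma>) \<longrightarrow>
           (x \<in> br_region uf z \<sigma> \<and> x \<in> Ez) \<or>
           (\<exists>x'\<in>Ez \<inter> br_region uf z \<sigma>. l1dist x' x \<le> \<delta>)))"

definition resp_prob :: "'k pmf \<Rightarrow> ('k \<Rightarrow> 'c \<Rightarrow> 'a \<Rightarrow> 'b \<Rightarrow> real) \<Rightarrow> 'c \<Rightarrow> real^'a::finite
     \<Rightarrow> 'b::{finite,linorder} \<Rightarrow> real" where
  "resp_prob F uf z x af = measure_pmf.prob F {k. best_resp uf k z x = af}"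

definition exp_util :: "'k pmf \<Rightarrow> ('c \<Rightarrow> 'a \<Rightarrow> 'b::{finite,linorder} \<Rightarrow> real) \<Rightarrow> ('k \<Rightarrow> 'c \<Rightarrow> 'a \<Rightarrow> 'b \<Rightarrow> real)
     \<Rightarrow> 'c \<Rightarrow> real^'a::finite \<Rightarrow> real" where
  "exp_util F u uf z x = measure_pmf.expectation F (\<lambda>k. mixu u z x (best_resp uf k z x))"

definition tv :: "('b::finite \<Rightarrow> real) \<Rightarrow> ('b \<Rightarrow> real) \<Rightarrow> real" where
  "tv p q = (\<Sum>a\<in>UNIV. \<bar>p a - q a\<bar>) / 2"

text \<open>Joint law of the follower sequence f_0,...,f_{T-1} (rounds 0-indexed), i.i.d. from F.\<close>
definition follower_seq :: "nat \<Rightarrow> 'k pmf \<Rightarrow> (nat \<Rightarrow> 'k) pmf" where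
  "follower_seq T F = Pi_pmf {..<T} undefined (\<lambda>_. F)"

end

theory Submission
  imports Defs
begin

lemma fin_Pi: "finite A \<Longrightarrow> finite (set_pmf (Pi_pmf A d (\<lambda>_. (F::'k::finite pmf))))"
  by (rule finite_subset[OF set_Pi_pmf_subset']) (auto intro!: finite_PiE_dflt)

lemma key:
  fixes F :: "'k::finite pmf" and h :: "(nat \<Rightarrow> 'k) \<Rightarrow> 'k \<Rightarrow> real"
  assumes A: "finite A" "t \<notin> A" and h: "\<And>g y k. h (g(t:=y)) k = h g k"
  shows "measure_pmf.expectation (Pi_pmf (insert t A) d (\<lambda>_. F)) (\<lambda>fs. h fs (fs t))
       = measure_pmf.expectation (Pi_pmf (insert t A) d (\<lambda>_. F)) (\<lambda>fs. measure_pmf.expectation F (h fs))"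
proof -
  define P where "P = Pi_pmf A d (\<lambda>_. F)"
  have h': "\<And>g y. h (g(t:=y)) = h g" using h by (intro ext) auto
  have S: "finite (set_pmf P)" unfolding P_def using fin_Pi[OF A(1)] .
  have L: "measure_pmf.expectation (pair_pmf F P) (\<lambda>x. h (snd x) (fst x))
      = (\<Sum>x\<in>UNIV \<times> set_pmf P. pmf (pair_pmf F P) x *\<^sub>R h (snd x) (fst x))"
    by (rule integral_measure_pmf) (use S in auto)
  also have "\<dots> = (\<Sum>y\<in>UNIV. \<Sum>f\<in>set_pmf P. pmf F y * pmf P f * h f y)"
    unfolding sum.cartesian_product by (intro sum.cong refl) (auto simp: pmf_pair)
  also have "\<dots> = (\<Sum>f\<in>set_pmf P. pmf P f * (\<Sum>y\<in>UNIV. pmf F y * h f y))"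
    by (subst sum.swap) (simp add: sum_distrib_left mult_ac)
  also have "\<dots> = measure_pmf.expectation P (\<lambda>f. measure_pmf.expectation F (h f))"
    by (subst integral_measure_pmf[of "set_pmf P"]) 
       (auto simp: S integral_measure_pmf[of UNIV] intro!: sum.cong)
  finally have L: "measure_pmf.expectation (pair_pmf F P) (\<lambda>x. h (snd x) (fst x))
     = measure_pmf.expectation P (\<lambda>f. measure_pmf.expectation F (h f))" .
  show ?thesis
    unfolding Pi_pmf_insert[OF A] P_def[symmetric]
    using L expectation_pair_pmf_snd[where f="\<lambda>f. measure_pmf.expectation F (h f)" and p=F and q=P]
    by (simp add: case_prod_unfold h')
qed

lemma mixu_bounds:
  assumes "x \<in> mixed_strats" "\<forall>a af. 0 \<le> u z a af \<and> u z a af \<le> 1"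
  shows "0 \<le> mixu u z x af \<and> mixu u z x af \<le> 1"
proof -
  have x: "\<And>a. 0 \<le> x$a" "(\<Sum>a\<in>UNIV. x$a) = 1" using assms(1) by (auto simp: mixed_strats_def)
  have "0 \<le> mixu u z x af" unfolding mixu_def using x assms(2) by (auto intro!: sum_nonneg)
  moreover have "mixu u z x af \<le> (\<Sum>a\<in>UNIV. x$a)" unfolding mixu_def
    using x assms(2) by (intro sum_mono) (simp add: mult_left_le)
  ultimately show ?thesis using x by simp
qed

lemma exp_util_sum:
  "exp_util F u uf z x = (\<Sum>af\<in>UNIV. mixu u z x af * resp_prob F uf z x af)"
proof -
  have "exp_util F u uf z x = measure_pmf.expectation (map_pmf (\<lambda>k. best_resp uf k z x) F) (mixu u z x)"
    unfolding exp_util_def by simp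
  also have "\<dots> = (\<Sum>af\<in>UNIV. pmf (map_pmf (\<lambda>k. best_resp uf k z x) F) af *\<^sub>R mixu u z x af)"
    by (rule integral_measure_pmf) auto
  also have "\<dots> = (\<Sum>af\<in>UNIV. mixu u z x af * resp_prob F uf z x af)"
    by (simp add: pmf_map resp_prob_def vimage_def mult.commute)
  finally show ?thesis .
qed

lemma approx:
  assumes "x \<in> mixed_strats" "\<forall>a af. 0 \<le> u z a af \<and> u z a af \<le> 1"
  shows "\<bar>exp_util F u uf z x - (\<Sum>af\<in>UNIV. mixu u z x af * q af)\<bar> \<le> 2 * tv (resp_prob F uf z x) q"
proof -
  have "\<bar>exp_util F u uf z x - (\<Sum>af\<in>UNIV. mixu u z x af * q af)\<bar>
      = \<bar>\<Sum>af\<in>UNIV. mixu u z x af * (resp_prob F uf z x af - q af)\<bar>"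
    by (simp add: exp_util_sum sum_subtractf[symmetric] right_diff_distrib)
  also have "\<dots> \<le> (\<Sum>af\<in>UNIV. \<bar>mixu u z x af * (resp_prob F uf z x af - q af)\<bar>)"
    by (rule sum_abs)
  also have "\<dots> \<le> (\<Sum>af\<in>UNIV. \<bar>resp_prob F uf z x af - q af\<bar>)"
  proof (intro sum_mono)
    fix af
    from mixu_bounds[of x u z af, OF assms] show "\<bar>mixu u z x af * (resp_prob F uf z x af - q af)\<bar> \<le> \<bar>resp_prob F uf z x af - q af\<bar>"
      by (simp add: abs_mult mult_left_le_one_le)
  qed
  finally show ?thesis by (simp add: tv_def)
qed

theorem mainTheorem3:
  fixes u :: "real^'d \<Rightarrow> 'a::finite \<Rightarrow> 'b::{finite,linorder} \<Rightarrow> real"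
    and uf :: "'k::finite \<Rightarrow> real^'d \<Rightarrow> 'a \<Rightarrow> 'b \<Rightarrow> real"
    and Z :: "(real^'d) set" and T :: nat and \<delta> :: real
    and E :: "real^'d \<Rightarrow> (real^'a) set"
    and F :: "'k pmf"
    and adv :: "nat \<Rightarrow> (nat \<Rightarrow> 'k) \<Rightarrow> real^'d"
    and phat :: "nat \<Rightarrow> (nat \<Rightarrow> 'k) \<Rightarrow> real^'d \<Rightarrow> real^'a \<Rightarrow> 'b \<Rightarrow> real"
    and pol :: "nat \<Rightarrow> (nat \<Rightarrow> 'k) \<Rightarrow> real^'d \<Rightarrow> real^'a"
    and pistar piE :: "real^'d \<Rightarrow> real^'a"
  assumes K_le_T: "CARD('k) \<le> T"
    and delta: "\<delta> \<le> 1 / real T"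
    and u_range: "\<forall>z\<in>Z. \<forall>a af. 0 \<le> u z a af \<and> u z a af \<le> 1"
    and uf_range: "\<forall>k. \<forall>z\<in>Z. \<forall>a af. 0 \<le> uf k z a af \<and> uf k z a af \<le> 1"
    and E_ext: "\<forall>z\<in>Z. E z \<subseteq> mixed_strats \<and> approx_ext uf \<delta> z (E z)"
    and adv_Z: "\<forall>t fs. adv t fs \<in> Z"
    and adv_hist: "\<forall>t fs gs. (\<forall>s<t. fs s = gs s) \<longrightarrow> adv t fs = adv t gs"
    and phat_hist: "\<forall>t fs gs. (\<forall>s<t. fs s = gs s) \<longrightarrow> phat t fs = phat t gs"
    and phat_nonneg: "\<forall>t fs z x af. 0 \<le> phat t fs z x af"
    and phat_sum: "\<forall>t fs z x. (\<Sum>af\<in>UNIV. phat t fs z x af) = 1"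
    and pol_hist: "\<forall>t fs gs. (\<forall>s<t. fs s = gs s) \<longrightarrow> pol t fs = pol t gs"
    and pol_argmax: "\<forall>t fs. \<forall>z\<in>Z. pol t fs z \<in> E z \<and>
          (\<forall>x\<in>E z. (\<Sum>af\<in>UNIV. mixu u z x af * phat t fs z x af)
                   \<le> (\<Sum>af\<in>UNIV. mixu u z (pol t fs z) af * phat t fs z (pol t fs z) af))"
    and pistar_simplex: "\<forall>z\<in>Z. pistar z \<in> mixed_strats"
    and pistar_opt: "\<forall>fs\<in>set_pmf (follower_seq T F). \<forall>\<pi>. (\<forall>z\<in>Z. \<pi> z \<in> mixed_strats) \<longrightarrow>
          (\<Sum>t<T. exp_util F u uf (adv t fs) (\<pi> (adv t fs)))
            \<le> (\<Sum>t<T. exp_util F u uf (adv t fs) (pistar (adv t fs)))"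
    and piE_E: "\<forall>z\<in>Z. piE z \<in> E z"
    and piE_gap: "\<forall>fs\<in>set_pmf (follower_seq T F).
          (\<Sum>t<T. exp_util F u uf (adv t fs) (pistar (adv t fs))
                 - exp_util F u uf (adv t fs) (piE (adv t fs))) \<le> 1"
  shows "measure_pmf.expectation (follower_seq T F)
           (\<lambda>fs. \<Sum>t<T. mixu u (adv t fs) (pistar (adv t fs))
                            (best_resp uf (fs t) (adv t fs) (pistar (adv t fs)))
                        - mixu u (adv t fs) (pol t fs (adv t fs))
                            (best_resp uf (fs t) (adv t fs) (pol t fs (adv t fs))))
         \<le> 1 + 2 * (\<Sum>t<T. measure_pmf.expectation (follower_seq T F)
              (\<lambda>fs. tv (resp_prob F uf (adv t fs) (piE (adv t fs)))
                        (phat t fs (adv t fs) (piE (adv t fs)))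
                  + tv (resp_prob F uf (adv t fs) (pol t fs (adv t fs)))
                        (phat t fs (adv t fs) (pol t fs (adv t fs)))))"
  proof -
  define P where "P = follower_seq T F"
  have finP: "finite (set_pmf P)" unfolding P_def follower_seq_def by (rule fin_Pi) simp
  have int: "\<And>f::(nat\<Rightarrow>'k)\<Rightarrow>real. integrable P f" using integrable_measure_pmf_finite[OF finP] .
  have intF: "\<And>f::'k\<Rightarrow>real. integrable F f" by (rule integrable_measure_pmf_finite) simp
  define U where "U t fs x = exp_util F u uf (adv t fs) x" for t fs x
  define G where "G t fs = U t fs (pistar (adv t fs)) - U t fs (piE (adv t fs))" for t fs
  define TV where "TV t fs = tv (resp_prob F uf (adv t fs) (piE (adv t fs)))
                        (phat t fs (adv t fs) (piE (adv t fs)))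
                  + tv (resp_prob F uf (adv t fs) (pol t fs (adv t fs)))
                        (phat t fs (adv t fs) (pol t fs (adv t fs)))" for t fs
  define D where "D t fs = mixu u (adv t fs) (pistar (adv t fs))
                            (best_resp uf (fs t) (adv t fs) (pistar (adv t fs)))
                        - mixu u (adv t fs) (pol t fs (adv t fs))
                            (best_resp uf (fs t) (adv t fs) (pol t fs (adv t fs)))" for t fs
  have step2: "measure_pmf.expectation P (D t) =
      measure_pmf.expectation P (\<lambda>fs. U t fs (pistar (adv t fs)) - U t fs (pol t fs (adv t fs)))"
    if t: "t < T" for t
  proof -
    define h where "h fs k = mixu u (adv t fs) (pistar (adv t fs))
                            (best_resp uf k (adv t fs) (pistar (adv t fs)))
                        - mixu u (adv t fs) (pol t fs (adv t fs))
                            (best_resp uf k (adv t fs) (pol t fs (adv t fs)))" for fs k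
    have ins: "{..<T} = insert t ({..<T} - {t})" using t by auto
    have hh: "\<And>g y k. h (g(t:=y)) k = h g k"
    proof -
      fix g y k
      have "adv t (g(t:=y)) = adv t g" using adv_hist by auto
      moreover have "pol t (g(t:=y)) = pol t g" using pol_hist by auto
      ultimately show "h (g(t:=y)) k = h g k" unfolding h_def by simp
    qed
    have "measure_pmf.expectation P (\<lambda>fs. h fs (fs t)) = measure_pmf.expectation P (\<lambda>fs. measure_pmf.expectation F (h fs))"
      unfolding P_def follower_seq_def
      using key[where A="{..<T}-{t}" and d=undefined and F=F and h=h and t=t, OF _ _ hh] by (simp only: ins[symmetric] finite_Diff finite_lessThan) simp
    moreover have "\<And>fs. measure_pmf.expectation F (h fs) = U t fs (pistar (adv t fs)) - U t fs (pol t fs (adv t fs))"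
      unfolding h_def U_def exp_util_def by (intro Bochner_Integration.integral_diff intF)
    moreover have "(\<lambda>fs. h fs (fs t)) = D t" unfolding h_def D_def by (rule ext) simp
    ultimately show ?thesis by simp
  qed
  have pw: "U t fs (pistar (adv t fs)) - U t fs (pol t fs (adv t fs)) \<le> G t fs + 2 * TV t fs" for t fs
  proof -
    define z where "z = adv t fs"
    have zZ: "z \<in> Z" unfolding z_def using adv_Z by auto
    have ur: "\<forall>a af. 0 \<le> u z a af \<and> u z a af \<le> 1" using u_range zZ by auto
    have eE: "piE z \<in> E z" using piE_E zZ by auto
    have pE: "pol t fs z \<in> E z" and am: "(\<Sum>af\<in>UNIV. mixu u z (piE z) af * phat t fs z (piE z) af)
                   \<le> (\<Sum>af\<in>UNIV. mixu u z (pol t fs z) af * phat t fs z (pol t fs z) af)"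
      using pol_argmax zZ eE by auto
    have Es: "E z \<subseteq> mixed_strats" using E_ext zZ by auto
    have a1: "\<bar>exp_util F u uf z (piE z) - (\<Sum>af\<in>UNIV. mixu u z (piE z) af * phat t fs z (piE z) af)\<bar>
       \<le> 2 * tv (resp_prob F uf z (piE z)) (phat t fs z (piE z))"
      by (rule approx) (use eE Es ur in auto)
    have a2: "\<bar>exp_util F u uf z (pol t fs z) - (\<Sum>af\<in>UNIV. mixu u z (pol t fs z) af * phat t fs z (pol t fs z) af)\<bar>
       \<le> 2 * tv (resp_prob F uf z (pol t fs z)) (phat t fs z (pol t fs z))"
      by (rule approx) (use pE Es ur in auto)
    show ?thesis using conjunct1[OF a1[unfolded abs_le_iff]] conjunct2[OF a2[unfolded abs_le_iff]] am unfolding G_def TV_def U_def z_def[symmetric] by argo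
  qed
  have gap: "measure_pmf.expectation P (\<lambda>fs. \<Sum>t<T. G t fs) \<le> 1"
  proof -
    have "measure_pmf.expectation P (\<lambda>fs. \<Sum>t<T. G t fs) \<le> measure_pmf.expectation P (\<lambda>fs. 1)"
      by (rule integral_mono_AE[OF int int]) 
         (use piE_gap in \<open>auto simp: AE_measure_pmf_iff P_def G_def U_def\<close>)
    then show ?thesis by simp
  qed
  have "measure_pmf.expectation P (\<lambda>fs. \<Sum>t<T. D t fs) = (\<Sum>t<T. measure_pmf.expectation P (D t))"
    by (rule Bochner_Integration.integral_sum) (rule int)
  also have "\<dots> = (\<Sum>t<T. measure_pmf.expectation P (\<lambda>fs. U t fs (pistar (adv t fs)) - U t fs (pol t fs (adv t fs))))"
    by (intro sum.cong refl step2) simp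
  also have "\<dots> \<le> (\<Sum>t<T. measure_pmf.expectation P (\<lambda>fs. G t fs + 2 * TV t fs))"
    by (intro sum_mono Bochner_Integration.integral_mono int pw)
  also have "\<dots> = (\<Sum>t<T. measure_pmf.expectation P (G t)) + 2 * (\<Sum>t<T. measure_pmf.expectation P (TV t))"
    by (simp add: Bochner_Integration.integral_add[OF int int] sum.distrib sum_distrib_left)
  also have "\<dots> = measure_pmf.expectation P (\<lambda>fs. \<Sum>t<T. G t fs) + 2 * (\<Sum>t<T. measure_pmf.expectation P (TV t))"
    by (subst Bochner_Integration.integral_sum) (auto intro: int)
  also have "\<dots> \<le> 1 + 2 * (\<Sum>t<T. measure_pmf.expectation P (TV t))"
    using gap by simp
  finally show ?thesis unfolding P_def D_def TV_def .
qed

end
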